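(* Let $(K_d)_{d\in\mathbb N}$ be a sequence of measurable sets $K_d\subseteq\mathbb R^d$ with $\mathrm{vol}_d(K_d)=1$, center of mass at the origin, and star-shaped with respect to the origin. Let $(B_d)_{d\in\mathbb N}$ be positive numbers with \[ \lim_{d\to\infty}B_d\cdot I_2(K_d)=0. \] Then \[ \lim_{d\to\infty}\sup_f\left|\int_{K_d}f(x)\,dx-f(0)\right|=0, \] where the supremum is taken over all $f\in\{f\in\mathscr C^1(K_d):\mathrm{Lip}(D^\theta f)\le B_d\text{ for all }\theta\in\mathbb S^{d-1}\}$.
   Context: $I_q(K)=\int_K\|x\|_2^q\,dx$ for measurable $K\subseteq\mathbb R^d$ and $q\ge0$. Center of mass at the origin means $\int_{K_d}x\,dx=0$. A set is star-shaped with respect to the origin if for each $x$ in it the segment from $0$ to $x$ lies in it. For $g$ on $K_d$, $\mathrm{Lip}(g)=\sup_{x\ne y\in K_d}|g(x)-g(y)|/\|x-y\|_2$; $D^\theta$ is the directional derivative in direction $\theta$. *)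

theory Defs
  imports "HOL-Analysis.Analysis"
begin

text \<open>Euclidean space R^d is encoded as the extensional functions on the index set
  {..<d}, i.e. the space of the product measure below.\<close>

definition Rd :: "nat \<Rightarrow> (nat \<Rightarrow> real) set" where
  "Rd d = PiE {..<d} (\<lambda>_. UNIV)"

definition lebd :: "nat \<Rightarrow> (nat \<Rightarrow> real) measure" where
  "lebd d = completion (PiM {..<d} (\<lambda>_. lborel))"

definition origin :: "nat \<Rightarrow> nat \<Rightarrow> real" where
  "origin d = (\<lambda>i\<in>{..<d}. 0)"

definition enorm :: "nat \<Rightarrow> (nat \<Rightarrow> real) \<Rightarrow> real" where
  "enorm d x = sqrt (\<Sum>i<d. (x i)\<^sup>2)"

definition unit_sphere :: "nat \<Rightarrow> (nat \<Rightarrow> real) set" where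
  "unit_sphere d = {\<theta> \<in> Rd d. enorm d \<theta> = 1}"

definition Iq :: "nat \<Rightarrow> real \<Rightarrow> (nat \<Rightarrow> real) set \<Rightarrow> ennreal" where
  "Iq d q K = set_nn_integral (lebd d) K (\<lambda>x. ennreal (enorm d x powr q))"

definition center_of_mass_origin :: "nat \<Rightarrow> (nat \<Rightarrow> real) set \<Rightarrow> bool" where
  "center_of_mass_origin d K \<longleftrightarrow>
     (\<forall>j<d. set_integrable (lebd d) K (\<lambda>x. x j) \<and> (LINT x:K|lebd d. x j) = 0)"

definition star_shaped_origin :: "nat \<Rightarrow> (nat \<Rightarrow> real) set \<Rightarrow> bool" where
  "star_shaped_origin d K \<longleftrightarrow>
     (\<forall>x\<in>K. \<forall>t\<in>{0..1::real}. (\<lambda>i\<in>{..<d}. t * x i) \<in> K)"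

definition dir_deriv :: "nat \<Rightarrow> (nat \<Rightarrow> real) \<Rightarrow> ((nat \<Rightarrow> real) \<Rightarrow> real) \<Rightarrow> (nat \<Rightarrow> real) \<Rightarrow> real" where
  "dir_deriv d \<theta> f x = deriv (\<lambda>t. f (\<lambda>i\<in>{..<d}. x i + t * \<theta> i)) 0"

definition C1_on :: "nat \<Rightarrow> (nat \<Rightarrow> real) set \<Rightarrow> ((nat \<Rightarrow> real) \<Rightarrow> real) \<Rightarrow> bool" where
  "C1_on d K f \<longleftrightarrow> (\<exists>g :: (nat \<Rightarrow> real) \<Rightarrow> nat \<Rightarrow> real.
     (\<forall>x\<in>K. ((\<lambda>y. (f y - f x - (\<Sum>i<d. g x i * (y i - x i))) / enorm d (\<lambda>i. y i - x i))
                \<longlongrightarrow> 0) (at x within Rd d)) \<and>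
     (\<forall>i<d. continuous_on K (\<lambda>x. g x i)))"

definition lip_le :: "nat \<Rightarrow> (nat \<Rightarrow> real) set \<Rightarrow> ((nat \<Rightarrow> real) \<Rightarrow> real) \<Rightarrow> real \<Rightarrow> bool" where
  "lip_le d K g B \<longleftrightarrow> (\<forall>x\<in>K. \<forall>y\<in>K. x \<noteq> y \<longrightarrow> \<bar>g x - g y\<bar> / enorm d (\<lambda>i. x i - y i) \<le> B)"

definition test_class :: "nat \<Rightarrow> (nat \<Rightarrow> real) set \<Rightarrow> real \<Rightarrow> ((nat \<Rightarrow> real) \<Rightarrow> real) set" where
  "test_class d K B = {f. C1_on d K f \<and> (\<forall>\<theta>\<in>unit_sphere d. lip_le d K (dir_deriv d \<theta> f) B)}"

end

theory Submission
  imports Defs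
begin


lemma enorm_cong: "(\<And>i. i < d \<Longrightarrow> x i = y i) \<Longrightarrow> enorm d x = enorm d y"
  unfolding enorm_def by (intro arg_cong[where f=sqrt] sum.cong) auto

lemma enorm_nonneg: "enorm d x \<ge> 0"
  unfolding enorm_def by (simp add: sum_nonneg)

lemma enorm_scale: "enorm d (\<lambda>i. c * x i) = \<bar>c\<bar> * enorm d x"
proof -
  have "(\<Sum>i<d. (c * x i)\<^sup>2) = c\<^sup>2 * (\<Sum>i<d. (x i)\<^sup>2)"
    by (simp add: sum_distrib_left power_mult_distrib)
  then show ?thesis unfolding enorm_def by (simp add: real_sqrt_mult)
qed

lemma enorm_sq: "(enorm d x)\<^sup>2 = (\<Sum>i<d. (x i)\<^sup>2)"
  unfolding enorm_def by (simp add: sum_nonneg)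

lemma enorm_zero_iff: "enorm d x = 0 \<longleftrightarrow> (\<forall>i<d. x i = 0)"
proof -
  have "enorm d x = 0 \<longleftrightarrow> (\<Sum>i<d. (x i)\<^sup>2) = 0" unfolding enorm_def by simp
  also have "\<dots> \<longleftrightarrow> (\<forall>i<d. x i = 0)"
    by (subst sum_nonneg_eq_0_iff) auto
  finally show ?thesis .
qed

lemma coord_tendsto: "((\<lambda>y::nat\<Rightarrow>real. y i) \<longlongrightarrow> x i) (at x within S)"
proof -
  have "continuous_on UNIV (\<lambda>y::nat\<Rightarrow>real. y i)" by (rule continuous_on_product_coordinates)
  then have "isCont (\<lambda>y::nat\<Rightarrow>real. y i) x"
    using continuous_on_eq_continuous_at[OF open_UNIV] by blast
  then have "((\<lambda>y::nat\<Rightarrow>real. y i) \<longlongrightarrow> x i) (at x)" by (simp add: isCont_def)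
  then show ?thesis by (rule tendsto_mono[OF at_le[OF subset_UNIV]])
qed

lemma enorm_tendsto: "((\<lambda>y. enorm d (\<lambda>i. y i - x i)) \<longlongrightarrow> 0) (at x within S)"
proof -
  have "((\<lambda>y. sqrt (\<Sum>i<d. (y i - x i)\<^sup>2)) \<longlongrightarrow> sqrt (\<Sum>i<d. (x i - x i)\<^sup>2)) (at x within S)"
    by (intro tendsto_real_sqrt tendsto_sum tendsto_power tendsto_diff coord_tendsto tendsto_const)
  then show ?thesis unfolding enorm_def by simp
qed

lemma Rd_neq:
  assumes "x \<in> Rd d" "y \<in> Rd d" "y \<noteq> x" shows "\<exists>i<d. y i \<noteq> x i"
proof (rule ccontr)
  assume "\<not> ?thesis"
  then have "y i = x i" for i using assms(1,2) unfolding Rd_def by (cases "i < d") (auto simp: PiE_def extensional_def)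
  then show False using assms(3) by auto
qed


lemma f_cont:
  assumes fr: "((\<lambda>y. (f y - f x - (\<Sum>i<d. g x i * (y i - x i))) / enorm d (\<lambda>i. y i - x i)) \<longlongrightarrow> 0) (at x within Rd d)"
    and x: "x \<in> Rd d"
  shows "(f \<longlongrightarrow> f x) (at x within Rd d)"
proof -
  define R where "R = (\<lambda>y. (f y - f x - (\<Sum>i<d. g x i * (y i - x i))) / enorm d (\<lambda>i. y i - x i))"
  have ev: "eventually (\<lambda>y. f x + (\<Sum>i<d. g x i * (y i - x i)) + R y * enorm d (\<lambda>i. y i - x i) = f y) (at x within Rd d)"
    unfolding eventually_at_filter
  proof (intro always_eventually allI impI)
    fix y assume "y \<noteq> x" "y \<in> Rd d"
    then obtain i where "i < d" "y i \<noteq> x i" using Rd_neq x by blast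
    then have "enorm d (\<lambda>i. y i - x i) \<noteq> 0" by (auto simp: enorm_zero_iff)
    then show "f x + (\<Sum>i<d. g x i * (y i - x i)) + R y * enorm d (\<lambda>i. y i - x i) = f y"
      unfolding R_def by simp
  qed
  have "((\<lambda>y. f x + (\<Sum>i<d. g x i * (y i - x i)) + R y * enorm d (\<lambda>i. y i - x i)) \<longlongrightarrow>
         f x + (\<Sum>i<d. g x i * (x i - x i)) + 0 * 0) (at x within Rd d)"
    by (intro tendsto_add tendsto_const tendsto_sum tendsto_mult tendsto_diff coord_tendsto enorm_tendsto fr[folded R_def])
  then have "((\<lambda>y. f x + (\<Sum>i<d. g x i * (y i - x i)) + R y * enorm d (\<lambda>i. y i - x i)) \<longlongrightarrow> f x) (at x within Rd d)"
    by simp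
  then show ?thesis using ev by (rule Lim_transform_eventually)
qed

lemma line_deriv:
  assumes fr: "((\<lambda>y. (f y - f p - (\<Sum>i<d. g p i * (y i - p i))) / enorm d (\<lambda>i. y i - p i)) \<longlongrightarrow> 0) (at p within Rd d)"
    and p: "(\<lambda>i\<in>{..<d}. a i + t0 * v i) = p"
  shows "((\<lambda>t. f (\<lambda>i\<in>{..<d}. a i + t * v i)) has_real_derivative (\<Sum>i<d. g p i * v i)) (at t0)"
proof (cases "\<forall>i<d. v i = 0")
  case True
  then have "\<And>t. (\<lambda>i\<in>{..<d}. a i + t * v i) = p" unfolding p[symmetric] by (intro restrict_ext) simp
  moreover have "(\<Sum>i<d. g p i * v i) = 0" using True by simp
  ultimately show ?thesis by simp
next
  case False
  then obtain j where j: "j < d" "v j \<noteq> 0" by blast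
  define c where "c = (\<lambda>t. (\<lambda>i\<in>{..<d}. a i + t * v i))"
  define L where "L = (\<Sum>i<d. g p i * v i)"
  define E where "E = enorm d v"
  define R where "R = (\<lambda>y. (f y - f p - (\<Sum>i<d. g p i * (y i - p i))) / enorm d (\<lambda>i. y i - p i))"
  have pi: "\<And>i. i < d \<Longrightarrow> p i = a i + t0 * v i" using p by auto
  have cont: "continuous_on UNIV c"
    unfolding c_def
  proof (intro continuous_on_coordinatewise_then_product)
    fix i show "continuous_on UNIV (\<lambda>t. restrict (\<lambda>i. a i + t * v i) {..<d} i)"
    proof (cases "i < d")
      case True
      then show ?thesis
        by (simp add: True) (intro continuous_on_add continuous_on_const continuous_on_mult_right continuous_on_id)
    next
      case False
      then show ?thesis by (simp add: False)
    qed
  qed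
  have ct: "(c \<longlongrightarrow> p) (at t0)"
  proof -
    have "isCont c t0" using cont continuous_on_eq_continuous_at open_UNIV by blast
    then have "(c \<longlongrightarrow> c t0) (at t0)" by (simp add: isCont_def)
    moreover have "c t0 = p" using p unfolding c_def by simp
    ultimately show ?thesis by simp
  qed
  have cin: "c t \<in> Rd d" for t unfolding c_def Rd_def by auto
  have cne: "c t \<noteq> p" if "t \<noteq> t0" for t
  proof
    assume "c t = p"
    then have "c t j = p j" by simp
    then have "a j + t * v j = a j + t0 * v j" using pi[OF j(1)] j unfolding c_def by simp
    then show False using that j by simp
  qed
  have filt: "filterlim c (at p within Rd d) (at t0)"
    unfolding filterlim_at
  proof
    show "\<forall>\<^sub>F t in at t0. c t \<in> Rd d \<and> c t \<noteq> p"
      unfolding eventually_at_filter using cin cne by simp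
  qed (rule ct)
  have Rc: "((\<lambda>t. R (c t)) \<longlongrightarrow> 0) (at t0)"
    using filterlim_compose[OF fr[folded R_def] filt] .
  have Epos: "E > 0"
  proof -
    have "E \<noteq> 0" unfolding E_def using j enorm_zero_iff[of d v] by blast
    then show ?thesis using enorm_nonneg[of d v] unfolding E_def by linarith
  qed
  have key: "\<bar>(f (c t) - f (c t0)) / (t - t0) - L\<bar> \<le> \<bar>R (c t)\<bar> * E" if "t \<noteq> t0" for t
  proof -
    have c0: "c t0 = p" using p unfolding c_def by simp
    have diff: "\<And>i. i < d \<Longrightarrow> c t i - p i = (t - t0) * v i" using pi unfolding c_def
      by (simp add: algebra_simps)
    have en: "enorm d (\<lambda>i. c t i - p i) = \<bar>t - t0\<bar> * E"
      unfolding E_def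
      by (subst enorm_cong[where y="\<lambda>i. (t - t0) * v i"]) (auto simp: diff enorm_scale)
    have sm: "(\<Sum>i<d. g p i * (c t i - p i)) = (t - t0) * L"
      unfolding L_def by (simp add: diff sum_distrib_left algebra_simps)
    have "R (c t) = (f (c t) - f p - (t - t0) * L) / (\<bar>t - t0\<bar> * E)"
      unfolding R_def en sm ..
    moreover have nz: "\<bar>t - t0\<bar> * E \<noteq> 0" using Epos that by simp
    ultimately have X: "f (c t) - f p - (t - t0) * L = R (c t) * (\<bar>t - t0\<bar> * E)"
      by (simp add: nonzero_eq_divide_eq)
    have tz: "t - t0 \<noteq> 0" using that by simp
    have "(f (c t) - f p) / (t - t0) - L = (f (c t) - f p - (t - t0) * L) / (t - t0)"
      using tz by (simp add: diff_divide_distrib)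
    then have "\<bar>(f (c t) - f p) / (t - t0) - L\<bar> = \<bar>R (c t)\<bar> * (\<bar>t - t0\<bar> * E) / \<bar>t - t0\<bar>"
    proof -
      have "\<bar>R (c t) * (\<bar>t - t0\<bar> * E)\<bar> = \<bar>R (c t)\<bar> * (\<bar>t - t0\<bar> * E)"
      proof (rule abs_mult_pos[symmetric])
        show "0 \<le> \<bar>t - t0\<bar> * E" using Epos by simp
      qed
      moreover have "\<bar>(f (c t) - f p) / (t - t0) - L\<bar> = \<bar>R (c t) * (\<bar>t - t0\<bar> * E)\<bar> / \<bar>t - t0\<bar>"
        using \<open>(f (c t) - f p) / (t - t0) - L = (f (c t) - f p - (t - t0) * L) / (t - t0)\<close>
        by (simp only: X abs_divide)
      ultimately show ?thesis by (simp only:)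
    qed
    also have "\<dots> = \<bar>R (c t)\<bar> * E" using tz by simp
    finally show ?thesis using c0 by simp
  qed
  have "((\<lambda>t. (f (c t) - f (c t0)) / (t - t0) - L) \<longlongrightarrow> 0) (at t0)"
  proof (rule Lim_null_comparison)
    show "\<forall>\<^sub>F t in at t0. norm ((f (c t) - f (c t0)) / (t - t0) - L) \<le> \<bar>R (c t)\<bar> * E"
      unfolding eventually_at_filter real_norm_def using key by (intro always_eventually) blast
    show "((\<lambda>t. \<bar>R (c t)\<bar> * E) \<longlongrightarrow> 0) (at t0)"
      using tendsto_mult[OF tendsto_rabs[OF Rc] tendsto_const[of E]] by simp
  qed
  then have "((\<lambda>t. (f (c t) - f (c t0)) / (t - t0)) \<longlongrightarrow> L) (at t0)"
    by (simp add: LIM_zero_iff)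
  then show ?thesis unfolding has_field_derivative_iff c_def L_def by simp
qed



lemma dir_deriv_eq:
  assumes fr: "((\<lambda>y. (f y - f x - (\<Sum>i<d. g x i * (y i - x i))) / enorm d (\<lambda>i. y i - x i)) \<longlongrightarrow> 0) (at x within Rd d)"
    and x: "x \<in> Rd d"
  shows "dir_deriv d \<theta> f x = (\<Sum>i<d. g x i * \<theta> i)"
proof -
  have "(\<lambda>i\<in>{..<d}. x i + 0 * \<theta> i) = x" using x unfolding Rd_def
    by (auto simp: PiE_def extensional_def fun_eq_iff)
  from line_deriv[where f=f and g=g and p=x and d=d and a=x and v=\<theta>, OF fr this] show ?thesis
    unfolding dir_deriv_def by (rule DERIV_imp_deriv)
qed

lemma grad_lip:
  assumes fr: "\<And>x. x \<in> K \<Longrightarrow> ((\<lambda>y. (f y - f x - (\<Sum>i<d. g x i * (y i - x i))) / enorm d (\<lambda>i. y i - x i)) \<longlongrightarrow> 0) (at x within Rd d)"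
    and KR: "K \<subseteq> Rd d"
    and lip: "\<forall>\<theta>\<in>unit_sphere d. lip_le d K (dir_deriv d \<theta> f) B"
    and Bpos: "B > 0"
    and x: "x \<in> K" and y: "y \<in> K"
  shows "\<bar>\<Sum>i<d. (g x i - g y i) * w i\<bar> \<le> B * enorm d (\<lambda>i. x i - y i) * enorm d w"
proof (cases "x = y \<or> enorm d w = 0")
  case True
  then show ?thesis
  proof
    assume "x = y" then show ?thesis using Bpos enorm_nonneg[of d] by simp
  next
    assume "enorm d w = 0"
    then have "\<forall>i<d. w i = 0" by (simp add: enorm_zero_iff)
    then show ?thesis using Bpos enorm_nonneg[of d "\<lambda>i. x i - y i"] enorm_nonneg[of d w] by simp
  qed
next
  case False
  define E where "E = enorm d w"
  have Epos: "E > 0" using False enorm_nonneg[of d w] unfolding E_def by linarith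
  define \<theta> where "\<theta> = (\<lambda>i\<in>{..<d}. w i / E)"
  have "enorm d \<theta> = enorm d (\<lambda>i. (1 / E) * w i)"
    unfolding \<theta>_def by (rule enorm_cong) simp
  also have "\<dots> = 1" using Epos unfolding enorm_scale E_def by simp
  finally have th: "\<theta> \<in> unit_sphere d" unfolding unit_sphere_def Rd_def \<theta>_def by auto
  have xR: "x \<in> Rd d" and yR: "y \<in> Rd d" using x y KR by auto
  have dx: "dir_deriv d \<theta> f x = (\<Sum>i<d. g x i * w i) / E"
    unfolding dir_deriv_eq[where f=f and g=g and d=d and x=x, OF fr[OF x] xR] \<theta>_def by (simp add: sum_divide_distrib)
  have dy: "dir_deriv d \<theta> f y = (\<Sum>i<d. g y i * w i) / E"
    unfolding dir_deriv_eq[where f=f and g=g and d=d and x=y, OF fr[OF y] yR] \<theta>_def by (simp add: sum_divide_distrib)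
  have xy: "x \<noteq> y" using False by simp
  have "\<bar>dir_deriv d \<theta> f x - dir_deriv d \<theta> f y\<bar> / enorm d (\<lambda>i. x i - y i) \<le> B"
    using lip th x y xy unfolding lip_le_def by blast
  moreover obtain j where "j < d" "x j \<noteq> y j" using Rd_neq[OF yR xR xy] by metis
  then have Dpos: "enorm d (\<lambda>i. x i - y i) > 0"
    using enorm_nonneg[of d "\<lambda>i. x i - y i"] enorm_zero_iff[of d "\<lambda>i. x i - y i"] by force
  ultimately have "\<bar>dir_deriv d \<theta> f x - dir_deriv d \<theta> f y\<bar> \<le> B * enorm d (\<lambda>i. x i - y i)"
    by (simp add: divide_le_eq)
  moreover have "dir_deriv d \<theta> f x - dir_deriv d \<theta> f y = (\<Sum>i<d. (g x i - g y i) * w i) / E"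
    unfolding dx dy by (simp add: diff_divide_distrib sum_subtractf left_diff_distrib)
  ultimately have "\<bar>\<Sum>i<d. (g x i - g y i) * w i\<bar> / E \<le> B * enorm d (\<lambda>i. x i - y i)"
    using Epos by simp
  then show ?thesis using Epos unfolding E_def by (simp add: divide_le_eq mult.assoc)
qed


lemma taylor:
  assumes fr: "\<And>x. x \<in> K \<Longrightarrow> ((\<lambda>y. (f y - f x - (\<Sum>i<d. g x i * (y i - x i))) / enorm d (\<lambda>i. y i - x i)) \<longlongrightarrow> 0) (at x within Rd d)"
    and KR: "K \<subseteq> Rd d"
    and lip: "\<forall>\<theta>\<in>unit_sphere d. lip_le d K (dir_deriv d \<theta> f) B"
    and Bpos: "B > 0"
    and star: "star_shaped_origin d K"
    and o: "origin d \<in> K"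
    and x: "x \<in> K"
  shows "\<bar>f x - f (origin d) - (\<Sum>i<d. g (origin d) i * x i)\<bar> \<le> B * (enorm d x)\<^sup>2"
proof -
  define S0 where "S0 = (\<Sum>i<d. g (origin d) i * x i)"
  define c where "c = (\<lambda>t. (\<lambda>i\<in>{..<d}. 0 + t * x i))"
  define phi where "phi = (\<lambda>t. f (c t) - t * S0)"
  have cK: "c t \<in> K" if "0 \<le> t" "t \<le> 1" for t
  proof -
    have "(\<lambda>i\<in>{..<d}. t * x i) \<in> K" using star x that unfolding star_shaped_origin_def by auto
    then show ?thesis unfolding c_def by simp
  qed
  have der: "(phi has_real_derivative ((\<Sum>i<d. g (c t) i * x i) - S0)) (at t)" if "0 \<le> t" "t \<le> 1" for t
  proof -
    have "(\<lambda>i\<in>{..<d}. 0 + t * x i) = c t" unfolding c_def ..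
    from line_deriv[where f=f and g=g and p="c t" and d=d and a="\<lambda>_. 0" and v=x, OF fr[OF cK[OF that]] this]
    have d1: "((\<lambda>s. f (c s)) has_real_derivative (\<Sum>i<d. g (c t) i * x i)) (at t)"
      unfolding c_def by simp
    have d2: "((\<lambda>s. s * S0) has_real_derivative S0) (at t)"
      using DERIV_cmult_right[OF DERIV_ident, of S0] by simp
    show ?thesis unfolding phi_def by (rule DERIV_diff[OF d1 d2])
  qed
  obtain z where z: "0 < z" "z < 1" "phi 1 - phi 0 = (1 - 0) * ((\<Sum>i<d. g (c z) i * x i) - S0)"
    using MVT2[of 0 1 phi, OF _ der] by auto
  have xR: "x \<in> Rd d" using x KR by auto
  have c1: "c 1 = x" using xR unfolding c_def Rd_def
    by (auto simp: PiE_def extensional_def fun_eq_iff)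
  have c0: "c 0 = origin d" unfolding c_def origin_def by simp
  have "f x - f (origin d) - S0 = (\<Sum>i<d. (g (c z) i - g (origin d) i) * x i)"
    using z(3) unfolding phi_def c1 c0 S0_def by (simp add: sum_subtractf left_diff_distrib)
  also have "\<bar>\<dots>\<bar> \<le> B * enorm d (\<lambda>i. c z i - origin d i) * enorm d x"
    by (rule grad_lip[OF fr KR lip Bpos cK o]) (use z in auto)
  also have "enorm d (\<lambda>i. c z i - origin d i) = z * enorm d x"
  proof -
    have "enorm d (\<lambda>i. c z i - origin d i) = enorm d (\<lambda>i. z * x i)"
      by (rule enorm_cong) (simp add: c_def origin_def)
    then show ?thesis using z by (simp add: enorm_scale)
  qed
  also have "B * (z * enorm d x) * enorm d x \<le> B * (1 * enorm d x) * enorm d x"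
    using z Bpos enorm_nonneg[of d x]
    by (intro mult_right_mono mult_left_mono) auto
  finally show ?thesis unfolding S0_def by (simp add: power2_eq_square mult.assoc)
qed



lemma space_lebd: "space (lebd d) = Rd d"
  unfolding lebd_def Rd_def by (simp add: space_PiM)

lemma coord_meas: "(\<lambda>x::nat\<Rightarrow>real. x i) \<in> borel_measurable (lebd d)"
proof (cases "i < d")
  case True
  have "(\<lambda>x::nat\<Rightarrow>real. x i) \<in> measurable (PiM {..<d} (\<lambda>_. lborel)) lborel"
    using True by (intro measurable_component_singleton) simp
  then have "(\<lambda>x::nat\<Rightarrow>real. x i) \<in> measurable (PiM {..<d} (\<lambda>_. lborel)) borel"
    by simp
  then show ?thesis unfolding lebd_def by (rule measurable_completion)
next
  case False
  have "(\<lambda>x::nat\<Rightarrow>real. undefined :: real) \<in> borel_measurable (lebd d)" by simp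
  then show ?thesis
    by (rule measurable_cong[THEN iffD1, rotated]) (use False in \<open>auto simp: space_lebd Rd_def PiE_def extensional_def\<close>)
qed

lemma id_meas: "(\<lambda>x::nat\<Rightarrow>real. x) \<in> borel_measurable (lebd d)"
  by (rule measurable_coordinatewise_then_product) (rule coord_meas)

lemma cont_meas:
  assumes "continuous_on K f" "K \<in> sets (lebd d)"
  shows "(f :: (nat\<Rightarrow>real) \<Rightarrow> real) \<in> borel_measurable (restrict_space (lebd d) K)"
proof -
  have "(\<lambda>x. x) \<in> measurable (restrict_space (lebd d) K) (restrict_space borel K)"
    by (rule measurable_restrict_space3[OF id_meas]) auto
  from measurable_comp[OF this borel_measurable_continuous_on_restrict[OF assms(1)]]
  show ?thesis by (simp add: comp_def)
qed


lemma main_bound: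
  fixes K :: "(nat \<Rightarrow> real) set" and f :: "(nat \<Rightarrow> real) \<Rightarrow> real"
  assumes meas: "K \<in> sets (lebd d)" and vol: "emeasure (lebd d) K = 1"
    and com: "center_of_mass_origin d K" and star: "star_shaped_origin d K"
    and Bpos: "B > 0" and I: "Iq d 2 K = ennreal r" and r: "r \<ge> 0"
    and ft: "f \<in> test_class d K B"
  shows "\<bar>(LINT x:K|lebd d. f x) - f (origin d)\<bar> \<le> B * r"
proof -
  define N where "N = restrict_space (lebd d) K"
  have KR: "K \<subseteq> Rd d" using sets.sets_into_space[OF meas] space_lebd by auto
  have Kint: "K \<inter> space (lebd d) \<in> sets (lebd d)" using meas KR space_lebd by (simp add: Int_absorb2)
  have spN: "space N = K" unfolding N_def using meas by simp
  have "K \<noteq> {}" using vol by auto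
  then obtain x0 where x0: "x0 \<in> K" by blast
  have o: "origin d \<in> K"
  proof -
    from star x0 have "\<forall>t\<in>{0..1::real}. (\<lambda>i\<in>{..<d}. t * x0 i) \<in> K"
      unfolding star_shaped_origin_def by blast
    then have "(\<lambda>i\<in>{..<d}. 0 * x0 i) \<in> K" by (rule bspec) simp
    then show ?thesis unfolding origin_def by simp
  qed
  from ft obtain g where
    fr0: "\<forall>x\<in>K. ((\<lambda>y. (f y - f x - (\<Sum>i<d. g x i * (y i - x i))) / enorm d (\<lambda>i. y i - x i)) \<longlongrightarrow> 0) (at x within Rd d)"
    and lip: "\<forall>\<theta>\<in>unit_sphere d. lip_le d K (dir_deriv d \<theta> f) B"
    unfolding test_class_def C1_on_def by blast
  have fr: "\<And>x. x \<in> K \<Longrightarrow> ((\<lambda>y. (f y - f x - (\<Sum>i<d. g x i * (y i - x i))) / enorm d (\<lambda>i. y i - x i)) \<longlongrightarrow> 0) (at x within Rd d)"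
    using fr0 by blast
  have contf: "continuous_on K f"
    unfolding continuous_on_def
  proof
    fix x assume x: "x \<in> K"
    have "(f \<longlongrightarrow> f x) (at x within Rd d)" using f_cont[where f=f and g=g and d=d and x=x, OF fr[OF x]] x KR by auto
    then show "(f \<longlongrightarrow> f x) (at x within K)" by (rule tendsto_mono[OF at_le[OF KR]])
  qed
  have fm[measurable]: "f \<in> borel_measurable N" unfolding N_def by (rule cont_meas[OF contf meas])
  have cm[measurable]: "\<And>i. (\<lambda>x::nat\<Rightarrow>real. x i) \<in> borel_measurable N"
    unfolding N_def by (rule measurable_restrict_space1[OF coord_meas])
  have em[measurable]: "(\<lambda>x. (enorm d x)\<^sup>2) \<in> borel_measurable N"
    unfolding enorm_sq by measurable
  have nn: "(\<integral>\<^sup>+x. ennreal ((enorm d x)\<^sup>2) \<partial>N) = ennreal r"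
  proof -
    have "(\<integral>\<^sup>+x. ennreal ((enorm d x)\<^sup>2) \<partial>N) = (\<integral>\<^sup>+x. ennreal ((enorm d x)\<^sup>2) * indicator K x \<partial>lebd d)"
      unfolding N_def by (rule nn_integral_restrict_space[OF Kint])
    also have "\<dots> = Iq d 2 K"
      unfolding Iq_def by (simp add: enorm_nonneg)
    finally show ?thesis using I by simp
  qed
  have ie: "integrable N (\<lambda>x. (enorm d x)\<^sup>2)"
    by (rule integrableI_nn_integral_finite[OF em _ nn]) simp
  have iev: "integral\<^sup>L N (\<lambda>x. (enorm d x)\<^sup>2) = r"
    using integral_eq_nn_integral[OF em] nn r by simp
  have ix: "integrable N (\<lambda>x. x j)" "integral\<^sup>L N (\<lambda>x. x j) = 0" if "j < d" for j
  proof -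
    have "set_integrable (lebd d) K (\<lambda>x. x j)" "(LINT x:K|lebd d. x j) = 0"
      using com that unfolding center_of_mass_origin_def by auto
    then show "integrable N (\<lambda>x. x j)" "integral\<^sup>L N (\<lambda>x. x j) = 0"
      unfolding N_def set_integrable_def set_lebesgue_integral_def
      by (simp_all add: integrable_restrict_space[OF Kint] integral_restrict_space[OF Kint])
  qed
  have emN: "emeasure N (space N) = 1"
    unfolding spN unfolding N_def using emeasure_restrict_space[OF Kint] vol by simp
  then interpret N: finite_measure N by (intro finite_measureI) simp
  have mN: "measure N (space N) = 1" using emN by (simp add: measure_def)
  define h where "h = (\<lambda>x. f x - f (origin d) - (\<Sum>i<d. g (origin d) i * x i))"
  have hm: "h \<in> borel_measurable N" unfolding h_def by measurable
  have hb: "\<bar>h x\<bar> \<le> B * (enorm d x)\<^sup>2" if "x \<in> space N" for x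
    unfolding h_def using taylor[where f=f and g=g and d=d and K=K, OF fr KR lip Bpos star o] that spN by auto
  have ib: "integrable N (\<lambda>x. B * (enorm d x)\<^sup>2)" using ie by simp
  have ih: "integrable N h"
  proof (rule Bochner_Integration.integrable_bound[OF ib hm])
    show "AE x in N. norm (h x) \<le> norm (B * (enorm d x)\<^sup>2)"
      using hb Bpos by (intro AE_I2) (simp add: abs_mult)
  qed
  have iint: "integrable N (\<lambda>x. \<Sum>i<d. g (origin d) i * x i)"
  proof (rule Bochner_Integration.integrable_sum)
    fix i assume "i \<in> {..<d}"
    then show "integrable N (\<lambda>x. g (origin d) i * x i)" using ix(1)[of i] by simp
  qed
  have isum: "integral\<^sup>L N (\<lambda>x. \<Sum>i<d. g (origin d) i * x i) = 0"
    using ix by (subst Bochner_Integration.integral_sum) auto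
  have feq: "f = (\<lambda>x. h x + f (origin d) + (\<Sum>i<d. g (origin d) i * x i))"
    unfolding h_def by auto
  have e1: "integral\<^sup>L N f = integral\<^sup>L N (\<lambda>x. h x + f (origin d) + (\<Sum>i<d. g (origin d) i * x i))"
    by (simp add: h_def)
  have e2: "integral\<^sup>L N (\<lambda>x. h x + f (origin d) + (\<Sum>i<d. g (origin d) i * x i)) =
      integral\<^sup>L N (\<lambda>x. h x + f (origin d)) + integral\<^sup>L N (\<lambda>x. \<Sum>i<d. g (origin d) i * x i)"
    by (rule Bochner_Integration.integral_add[OF Bochner_Integration.integrable_add[OF ih N.integrable_const] iint])
  have e3: "integral\<^sup>L N (\<lambda>x. h x + f (origin d)) = integral\<^sup>L N h + integral\<^sup>L N (\<lambda>x. f (origin d))"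
    by (rule Bochner_Integration.integral_add[OF ih N.integrable_const])
  have intf: "integral\<^sup>L N f = integral\<^sup>L N h + f (origin d)"
    unfolding e1 e2 e3 isum using mN by simp
  have LI: "(LINT x:K|lebd d. f x) = integral\<^sup>L N f"
    unfolding N_def set_lebesgue_integral_def by (simp add: integral_restrict_space[OF Kint])
  have "\<bar>(LINT x:K|lebd d. f x) - f (origin d)\<bar> = \<bar>integral\<^sup>L N h\<bar>" unfolding LI intf by simp
  also have "\<dots> \<le> integral\<^sup>L N (\<lambda>x. \<bar>h x\<bar>)" by (rule integral_abs_bound)
  also have "\<dots> \<le> integral\<^sup>L N (\<lambda>x. B * (enorm d x)\<^sup>2)"
    using hb by (intro integral_mono integrable_abs ih ib) auto
  also have "\<dots> = B * r" using iev by simp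
  finally show ?thesis .
qed



lemma zero_test: "B > 0 \<Longrightarrow> (\<lambda>_. 0) \<in> test_class d K B"
proof -
  assume B: "B > 0"
  have c1: "C1_on d K (\<lambda>_. 0)"
    unfolding C1_on_def by (rule exI[of _ "\<lambda>x i. 0"]) simp
  have dd: "dir_deriv d \<theta> (\<lambda>_. 0) x = 0" for \<theta> x
    unfolding dir_deriv_def by simp
  show ?thesis unfolding test_class_def lip_le_def using c1 B by (simp add: dd)
qed

theorem proposition5p2:
  fixes K :: "nat \<Rightarrow> (nat \<Rightarrow> real) set" and B :: "nat \<Rightarrow> real"
  assumes meas: "\<And>d. K d \<in> sets (lebd d)"
    and vol: "\<And>d. emeasure (lebd d) (K d) = 1"
    and com: "\<And>d. center_of_mass_origin d (K d)"
    and star: "\<And>d. star_shaped_origin d (K d)"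
    and Bpos: "\<And>d. B d > 0"
    and lim: "(\<lambda>d. ennreal (B d) * Iq d 2 (K d)) \<longlonglongrightarrow> 0"
  shows "(\<lambda>d. SUP f \<in> test_class d (K d) (B d).
            ereal \<bar>(LINT x:K d|lebd d. f x) - f (origin d)\<bar>) \<longlonglongrightarrow> 0"
proof -
  define r where "r = (\<lambda>d. enn2real (Iq d 2 (K d)))"
  define S where "S = (\<lambda>d. SUP f \<in> test_class d (K d) (B d).
            ereal \<bar>(LINT x:K d|lebd d. f x) - f (origin d)\<bar>)"
  have ev1: "eventually (\<lambda>d. ennreal (B d) * Iq d 2 (K d) < 1) sequentially"
    using lim by (rule order_tendstoD) simp
  have fin: "eventually (\<lambda>d. Iq d 2 (K d) \<noteq> \<infinity>) sequentially"
  proof (rule eventually_mono[OF ev1])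
    fix d assume "ennreal (B d) * Iq d 2 (K d) < 1"
    moreover have "ennreal (B d) \<noteq> 0" using Bpos[of d] by simp
    ultimately show "Iq d 2 (K d) \<noteq> \<infinity>" by (auto simp: ennreal_mult_eq_top_iff)
  qed
  have upper: "eventually (\<lambda>d. S d \<le> ereal (B d * r d)) sequentially"
  proof (rule eventually_mono[OF fin])
    fix d assume "Iq d 2 (K d) \<noteq> \<infinity>"
    then have I: "Iq d 2 (K d) = ennreal (r d)" unfolding r_def by (simp add: ennreal_enn2real_if)
    have r0: "r d \<ge> 0" unfolding r_def by simp
    show "S d \<le> ereal (B d * r d)" unfolding S_def
    proof (rule SUP_least)
      fix f assume "f \<in> test_class d (K d) (B d)"
      from main_bound[OF meas vol com star Bpos I r0 this]
      show "ereal \<bar>(LINT x:K d|lebd d. f x) - f (origin d)\<bar> \<le> ereal (B d * r d)" by simp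
    qed
  qed
  have lower: "eventually (\<lambda>d. 0 \<le> S d) sequentially"
  proof (rule always_eventually, rule allI)
    fix d
    have "ereal \<bar>(LINT x:K d|lebd d. (\<lambda>_. 0::real) x) - (\<lambda>_. 0::real) (origin d)\<bar> \<le> S d"
      unfolding S_def by (rule SUP_upper[OF zero_test[OF Bpos]])
    then show "0 \<le> S d" by (simp add: zero_ereal_def)
  qed
  have "(\<lambda>d. enn2real (ennreal (B d) * Iq d 2 (K d))) \<longlonglongrightarrow> 0"
    by (rule tendsto_enn2real) (use lim in simp_all)
  moreover have "enn2real (ennreal (B d) * Iq d 2 (K d)) = B d * r d" for d
    unfolding r_def enn2real_mult using Bpos[of d] by simp
  ultimately have rl: "(\<lambda>d. B d * r d) \<longlonglongrightarrow> 0" by simp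
  have ul: "(\<lambda>d. ereal (B d * r d)) \<longlonglongrightarrow> 0"
    using tendsto_ereal[OF rl] by (simp add: zero_ereal_def)
  have "S \<longlonglongrightarrow> 0"
    by (rule tendsto_sandwich[OF lower upper tendsto_const ul])
  then show ?thesis unfolding S_def .
qed

end
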